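(* Let $d\ge2$ and let $\rho_{DS}$ be a diagonal symmetric state on $(\mathbb{C}^d)^{\otimes 4}$. If the partial transpose of $\rho_{DS}$ with respect to the bipartition of the four parties into two pairs ($2:2$) is positive semidefinite, then $\rho_{DS}$ is PPT, i.e. its partial transpose with respect to every bipartition of the four parties is positive semidefinite.
   Context: For $N=4$ parties and local dimension $d$, Dicke states are $|D_{\mathbf k}\rangle=\binom{4}{\mathbf k}^{-1/2}\sum_{\pi}\pi\big(|0\rangle^{\otimes k_0}\otimes\cdots\otimes|d-1\rangle^{\otimes k_{d-1}}\big)$, where $\mathbf k=(k_0,\dots,k_{d-1})$, $k_i\ge0$, $\sum k_i=4$, the sum runs over distinct permutations of the tensor factors and $\binom{4}{\mathbf k}=\frac{4!}{k_0!\cdots k_{d-1}!}$. A diagonal symmetric state is a convex mixture $\sum_{\mathbf k}p_{\mathbf k}|D_{\mathbf k}\rangle\langle D_{\mathbf k}|$ with $p_{\mathbf k}\ge0$, $\sum p_{\mathbf k}=1$. By permutation symmetry the relevant bipartitions are $1:3$ and $2:2$. *)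

theory Defs
  imports Complex_Main "HOL-Library.FuncSet"
begin

text \<open>Computational basis vectors of
  (C^d)^{\<otimes>4} are indexed by maps x : {0..<4} \<rightarrow> {0..<d} (extensional).
  An operator is a matrix indexed by pairs of such basis labels.\<close>

definition basis_idx :: "nat \<Rightarrow> (nat \<Rightarrow> nat) set" where
  "basis_idx d = ({0..<4::nat} \<rightarrow>\<^sub>E {0..<d})"

definition dicke_labels :: "nat \<Rightarrow> (nat \<Rightarrow> nat) set" where
  "dicke_labels d = {k \<in> {0..<d} \<rightarrow>\<^sub>E UNIV. (\<Sum>j<d. k j) = 4}"

definition multinom4 :: "nat \<Rightarrow> (nat \<Rightarrow> nat) \<Rightarrow> nat" where
  "multinom4 d k = fact 4 div (\<Prod>j<d. fact (k j))"

text \<open>Amplitude of the Dicke state |D_k> on basis vector x: the basis vectors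
  occurring in the sum over distinct permutations are exactly those with k_j
  tensor factors equal to |j>, each with coefficient multinom^{-1/2}.\<close>
definition dicke_amp :: "nat \<Rightarrow> (nat \<Rightarrow> nat) \<Rightarrow> (nat \<Rightarrow> nat) \<Rightarrow> complex" where
  "dicke_amp d k x =
     (if \<forall>j<d. card {i\<in>{0..<4::nat}. x i = j} = k j
      then complex_of_real (1 / sqrt (real (multinom4 d k))) else 0)"

definition diag_sym_state :: "nat \<Rightarrow> ((nat \<Rightarrow> nat) \<Rightarrow> (nat \<Rightarrow> nat) \<Rightarrow> complex) \<Rightarrow> bool" where
  "diag_sym_state d \<rho> \<longleftrightarrow>
     (\<exists>p :: (nat \<Rightarrow> nat) \<Rightarrow> real.
        (\<forall>k\<in>dicke_labels d. p k \<ge> 0) \<and> (\<Sum>k\<in>dicke_labels d. p k) = 1 \<and>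
        (\<forall>x\<in>basis_idx d. \<forall>y\<in>basis_idx d.
           \<rho> x y = (\<Sum>k\<in>dicke_labels d.
                      complex_of_real (p k) * dicke_amp d k x * cnj (dicke_amp d k y))))"

definition ptrans :: "nat set \<Rightarrow> ((nat \<Rightarrow> nat) \<Rightarrow> (nat \<Rightarrow> nat) \<Rightarrow> complex)
                      \<Rightarrow> ((nat \<Rightarrow> nat) \<Rightarrow> (nat \<Rightarrow> nat) \<Rightarrow> complex)" where
  "ptrans S \<rho> x y = \<rho> (\<lambda>i. if i \<in> S then y i else x i) (\<lambda>i. if i \<in> S then x i else y i)"

definition psd :: "nat \<Rightarrow> ((nat \<Rightarrow> nat) \<Rightarrow> (nat \<Rightarrow> nat) \<Rightarrow> complex) \<Rightarrow> bool" where
  "psd d M \<longleftrightarrow>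
     (\<forall>v :: (nat \<Rightarrow> nat) \<Rightarrow> complex.
        Im (\<Sum>x\<in>basis_idx d. \<Sum>y\<in>basis_idx d. cnj (v x) * M x y * v y) = 0 \<and>
        Re (\<Sum>x\<in>basis_idx d. \<Sum>y\<in>basis_idx d. cnj (v x) * M x y * v y) \<ge> 0)"

end

theory Submission imports Defs "HOL-Library.Multiset" "HOL-Combinatorics.Permutations" begin

definition ms :: "(nat \<Rightarrow> nat) \<Rightarrow> nat multiset" where
  "ms x = image_mset x (mset_set {0..<4})"

lemma ms_explicit: "ms x = {#x 0, x 1, x 2, x 3#}"
  by (simp add: ms_def numeral_eq_Suc atLeast0_lessThan_Suc add_mset_commute)

lemma count_ms: "count (ms x) j = card {i\<in>{0..<4::nat}. x i = j}"
  unfolding ms_def count_image_mset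
  by (simp add: vimage_def Int_def conj_commute)

lemma set_ms: "x \<in> basis_idx d \<Longrightarrow> set_mset (ms x) \<subseteq> {0..<d}"
  by (auto simp: ms_def basis_idx_def PiE_def Pi_def)

definition cnt :: "nat \<Rightarrow> nat multiset \<Rightarrow> (nat \<Rightarrow> nat)" where
  "cnt d M = restrict (\<lambda>j. count M j) {0..<d}"

lemma cnt_eq: "x \<in> basis_idx d \<Longrightarrow> y \<in> basis_idx d \<Longrightarrow> cnt d (ms x) = cnt d (ms y) \<longleftrightarrow> ms x = ms y"
proof
  assume x: "x \<in> basis_idx d" and y: "y \<in> basis_idx d" and e: "cnt d (ms x) = cnt d (ms y)"
  show "ms x = ms y"
  proof (rule multiset_eqI)
    fix j
    show "count (ms x) j = count (ms y) j"
    proof (cases "j < d")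
      case True
      then show ?thesis using fun_cong[OF e, of j] by (simp add: cnt_def)
    next
      case False
      then have "j \<notin># ms x" "j \<notin># ms y" using set_ms[OF x] set_ms[OF y] by auto
      then show ?thesis by (simp add: not_in_iff)
    qed
  qed
qed simp

lemma cnt_label: "x \<in> basis_idx d \<Longrightarrow> cnt d (ms x) \<in> dicke_labels d"
proof -
  assume x: "x \<in> basis_idx d"
  have "(\<Sum>j<d. card {i\<in>{0..<4::nat}. x i = j}) = (\<Sum>i\<in>{0..<4::nat}. 1)"
    using sum.group[of "{0..<4::nat}" "{..<d}" x "\<lambda>_. 1::nat"] x
    by (auto simp: basis_idx_def PiE_def Pi_def image_subset_iff conj_commute)
  then show ?thesis
    by (simp add: dicke_labels_def cnt_def count_ms)
qed

lemma amp_eq: "k \<in> dicke_labels d \<Longrightarrow> x \<in> basis_idx d \<Longrightarrow>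
   dicke_amp d k x = (if k = cnt d (ms x) then complex_of_real (1 / sqrt (real (multinom4 d k))) else 0)"
proof -
  assume k: "k \<in> dicke_labels d" and x: "x \<in> basis_idx d"
  have "(\<forall>j<d. card {i\<in>{0..<4::nat}. x i = j} = k j) \<longleftrightarrow> k = cnt d (ms x)"
  proof
    assume h: "\<forall>j<d. card {i\<in>{0..<4::nat}. x i = j} = k j"
    show "k = cnt d (ms x)"
    proof
      fix j show "k j = cnt d (ms x) j"
        using h k by (cases "j < d") (auto simp: cnt_def count_ms dicke_labels_def PiE_def extensional_def)
    qed
  qed (auto simp: cnt_def count_ms)
  then show ?thesis unfolding dicke_amp_def by simp
qed

lemma finite_labels: "finite (dicke_labels d)"
proof (rule finite_subset[of _ "{0..<d} \<rightarrow>\<^sub>E {0..4::nat}"])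
  show "dicke_labels d \<subseteq> {0..<d} \<rightarrow>\<^sub>E {0..4}"
  proof
    fix k assume k: "k \<in> dicke_labels d"
    have "k j \<le> 4" if "j < d" for j
    proof -
      have "k j \<le> (\<Sum>j<d. k j)" using that by (intro member_le_sum) auto
      then show ?thesis using k by (simp add: dicke_labels_def)
    qed
    then show "k \<in> {0..<d} \<rightarrow>\<^sub>E {0..4}" using k by (auto simp: dicke_labels_def PiE_def Pi_def)
  qed
qed (simp add: finite_PiE)

lemma sq_aux: "r \<ge> 0 \<Longrightarrow> complex_of_real (1 / sqrt r) * complex_of_real (1 / sqrt r) = complex_of_real (1 / r)"
  by (simp flip: of_real_mult)

lemma rho_form:
  assumes "diag_sym_state d \<rho>"
  shows "\<exists>g. (\<forall>M. g M \<ge> 0) \<and> (\<forall>x\<in>basis_idx d. \<forall>y\<in>basis_idx d.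
     \<rho> x y = (if ms x = ms y then complex_of_real (g (ms x)) else 0))"
proof -
  obtain p where p0: "\<forall>k\<in>dicke_labels d. p k \<ge> 0"
    and r: "\<forall>x\<in>basis_idx d. \<forall>y\<in>basis_idx d.
           \<rho> x y = (\<Sum>k\<in>dicke_labels d.
                      complex_of_real (p k) * dicke_amp d k x * cnj (dicke_amp d k y))"
    using assms unfolding diag_sym_state_def by blast
  define g where "g M = (if cnt d M \<in> dicke_labels d then p (cnt d M) * (1 / real (multinom4 d (cnt d M))) else 0)" for M
  have "\<forall>M. g M \<ge> 0" using p0 by (simp add: g_def)
  moreover have "\<rho> x y = (if ms x = ms y then complex_of_real (g (ms x)) else 0)"
    if x: "x \<in> basis_idx d" and y: "y \<in> basis_idx d" for x y
  proof -
    have "\<rho> x y = (\<Sum>k\<in>dicke_labels d. if k = cnt d (ms x) then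
         (if ms x = ms y then complex_of_real (g (ms x)) else 0) else 0)"
      unfolding r[rule_format, OF x y]
    proof (rule sum.cong[OF refl])
      fix k assume k: "k \<in> dicke_labels d"
      define c where "c = complex_of_real (1 / sqrt (real (multinom4 d k)))"
      have cc: "c * cnj c = complex_of_real (1 / real (multinom4 d k))"
        unfolding c_def by (simp only: complex_cnj_complex_of_real sq_aux of_nat_0_le_iff)
      show "complex_of_real (p k) * dicke_amp d k x * cnj (dicke_amp d k y) =
         (if k = cnt d (ms x) then (if ms x = ms y then complex_of_real (g (ms x)) else 0) else 0)"
        using x y k cnt_eq[OF x y] unfolding amp_eq[OF k x] amp_eq[OF k y] c_def[symmetric]
        by (auto simp: g_def mult.assoc cc)
    qed
    also have "\<dots> = (if ms x = ms y then complex_of_real (g (ms x)) else 0)"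
      using cnt_label[OF x] by (cases "ms x = ms y") (simp_all add: sum.delta finite_labels)
    finally show ?thesis .
  qed
  ultimately show ?thesis by blast
qed


lemma ms_comp: "\<pi> permutes {0..<4} \<Longrightarrow> ms (a \<circ> \<pi>) = ms a"
proof -
  assume p: "\<pi> permutes {0..<4}"
  have "ms (a \<circ> \<pi>) = image_mset a (image_mset \<pi> (mset_set {0..<4}))"
    by (simp add: ms_def multiset.map_comp)
  also have "image_mset \<pi> (mset_set {0..<4}) = mset_set {0..<4}"
    using p by (simp add: image_mset_mset_set permutes_inj_on permutes_image)
  finally show ?thesis by (simp add: ms_def o_def)
qed

lemma bilin: "cnj (sum v X) * c * sum w Y = (\<Sum>x\<in>X. \<Sum>y\<in>Y. cnj (v x) * c * w y)"
  by (simp add: cnj_sum sum_distrib_left sum_distrib_right sum.swap[of _ Y])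

lemma agg:
  fixes v :: "'a \<Rightarrow> complex" and key :: "'a \<Rightarrow> 'b"
  assumes fin: "finite B"
  shows "(\<Sum>x\<in>B. \<Sum>y\<in>B. cnj (v x) * C (key x) (key y) * v y) =
    (\<Sum>a\<in>key ` B. \<Sum>b\<in>key ` B. cnj (\<Sum>x\<in>{x\<in>B. key x = a}. v x) * C a b * (\<Sum>x\<in>{x\<in>B. key x = b}. v x))"
proof -
  have grp: "(\<Sum>x\<in>B. f x) = (\<Sum>a\<in>key ` B. \<Sum>x\<in>{x\<in>B. key x = a}. f x)" for f :: "'a \<Rightarrow> complex"
    using sum.group[OF fin finite_imageI[OF fin], where g=key and h=f] by simp
  have "(\<Sum>x\<in>B. \<Sum>y\<in>B. cnj (v x) * C (key x) (key y) * v y) =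
        (\<Sum>x\<in>B. \<Sum>b\<in>key ` B. \<Sum>y\<in>{y\<in>B. key y = b}. cnj (v x) * C (key x) b * v y)"
    by (subst grp) (auto intro!: sum.cong)
  also have "\<dots> = (\<Sum>a\<in>key ` B. \<Sum>x\<in>{x\<in>B. key x = a}. \<Sum>b\<in>key ` B. \<Sum>y\<in>{y\<in>B. key y = b}. cnj (v x) * C a b * v y)"
    by (subst grp) (auto intro!: sum.cong)
  also have "\<dots> = (\<Sum>a\<in>key ` B. \<Sum>b\<in>key ` B. \<Sum>x\<in>{x\<in>B. key x = a}. \<Sum>y\<in>{y\<in>B. key y = b}. cnj (v x) * C a b * v y)"
    by (intro sum.cong refl sum.swap)
  also have "\<dots> = (\<Sum>a\<in>key ` B. \<Sum>b\<in>key ` B. cnj (\<Sum>x\<in>{x\<in>B. key x = a}. v x) * C a b * (\<Sum>x\<in>{x\<in>B. key x = b}. v x))"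
    by (simp only: bilin)
  finally show ?thesis .
qed

lemma nonneg_aux: "(c::real) \<ge> 0 \<Longrightarrow> 0 \<le> a * c * a + b * c * b"
proof -
  assume c: "c \<ge> 0"
  have e: "a * c * a + b * c * b = c * (a * a + b * b)" by (simp add: algebra_simps)
  show ?thesis unfolding e using c by (simp add: add_nonneg_nonneg)
qed

lemma re_cnj_self: "Re (cnj z * complex_of_real r * z) = r * (cmod z)^2"
  unfolding cmod_power2 by (simp add: algebra_simps power2_eq_square)


locale symrho =
  fixes d :: nat and g :: "nat multiset \<Rightarrow> real" and \<rho> :: "(nat \<Rightarrow> nat) \<Rightarrow> (nat \<Rightarrow> nat) \<Rightarrow> complex"
  assumes g0: "\<And>M. g M \<ge> 0"
    and rho: "\<And>x y. x \<in> basis_idx d \<Longrightarrow> y \<in> basis_idx d \<Longrightarrow>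
       \<rho> x y = (if ms x = ms y then complex_of_real (g (ms x)) else 0)"
begin

definition Q where
  "Q S v = (\<Sum>x\<in>basis_idx d. \<Sum>y\<in>basis_idx d. cnj (v x) * ptrans S \<rho> x y * v y)"

lemma finB: "finite (basis_idx d)"
  by (simp add: basis_idx_def finite_PiE)

lemma mix_in: "x \<in> basis_idx d \<Longrightarrow> y \<in> basis_idx d \<Longrightarrow> (\<lambda>i. if i \<in> S then y i else x i) \<in> basis_idx d"
  by (auto simp: basis_idx_def PiE_def Pi_def extensional_def)

lemma pt: "x \<in> basis_idx d \<Longrightarrow> y \<in> basis_idx d \<Longrightarrow> ptrans S \<rho> x y =
   (if ms (\<lambda>i. if i \<in> S then y i else x i) = ms (\<lambda>i. if i \<in> S then x i else y i)
    then complex_of_real (g (ms (\<lambda>i. if i \<in> S then y i else x i))) else 0)"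
  unfolding ptrans_def by (simp add: rho mix_in)

lemma pt_sym: "x \<in> basis_idx d \<Longrightarrow> y \<in> basis_idx d \<Longrightarrow> ptrans S \<rho> x y = ptrans S \<rho> y x"
  by (simp add: pt)

lemma pt_cnj: "x \<in> basis_idx d \<Longrightarrow> y \<in> basis_idx d \<Longrightarrow> cnj (ptrans S \<rho> x y) = ptrans S \<rho> x y"
  by (simp add: pt)

lemma Q_cnj: "cnj (Q S v) = Q S v"
proof -
  have "cnj (Q S v) = (\<Sum>x\<in>basis_idx d. \<Sum>y\<in>basis_idx d. v x * ptrans S \<rho> x y * cnj (v y))"
    unfolding Q_def by (simp add: cnj_sum pt_cnj)
  also have "\<dots> = (\<Sum>y\<in>basis_idx d. \<Sum>x\<in>basis_idx d. v x * ptrans S \<rho> x y * cnj (v y))"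
    by (rule sum.swap)
  also have "\<dots> = Q S v"
    unfolding Q_def by (intro sum.cong refl) (simp add: pt_sym[of _ _ S] mult.commute mult.left_commute)
  finally show ?thesis .
qed

lemma Im_Q: "Im (Q S v) = 0"
  using arg_cong[OF Q_cnj[of S v], of Im] by simp

lemma psdI: "(\<And>v. Re (Q S v) \<ge> 0) \<Longrightarrow> psd d (ptrans S \<rho>)"
  unfolding psd_def using Im_Q unfolding Q_def by blast

lemma psdD: "psd d (ptrans S \<rho>) \<Longrightarrow> Re (Q S v) \<ge> 0"
  unfolding psd_def Q_def by blast

lemma Q_compl: "S \<subseteq> {0..<4} \<Longrightarrow> Q S v = Q ({0..<4} - S) (\<lambda>x. cnj (v x))"
proof -
  assume S: "S \<subseteq> {0..<4}"
  have M: "ptrans ({0..<4} - S) \<rho> y x = ptrans S \<rho> x y" if x: "x \<in> basis_idx d" and y: "y \<in> basis_idx d" for x y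
  proof -
    have e1: "(\<lambda>i. if i \<in> {0..<4} - S then x i else y i) = (\<lambda>i. if i \<in> S then y i else x i)"
      using x y S by (auto simp: basis_idx_def PiE_def extensional_def)
    have e2: "(\<lambda>i. if i \<in> {0..<4} - S then y i else x i) = (\<lambda>i. if i \<in> S then x i else y i)"
      using x y S by (auto simp: basis_idx_def PiE_def extensional_def)
    show ?thesis unfolding ptrans_def e1 e2 ..
  qed
  have "Q ({0..<4} - S) (\<lambda>x. cnj (v x)) = (\<Sum>y\<in>basis_idx d. \<Sum>x\<in>basis_idx d. v y * ptrans S \<rho> x y * cnj (v x))"
    unfolding Q_def by (intro sum.cong refl) (simp add: M)
  also have "\<dots> = (\<Sum>x\<in>basis_idx d. \<Sum>y\<in>basis_idx d. v y * ptrans S \<rho> x y * cnj (v x))"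
    by (rule sum.swap)
  also have "\<dots> = Q S v"
    unfolding Q_def by (intro sum.cong refl) (simp add: mult.commute mult.left_commute)
  finally show ?thesis by simp
qed

lemma bijB: "\<pi> permutes {0..<4} \<Longrightarrow> bij_betw (\<lambda>x. x \<circ> \<pi>) (basis_idx d) (basis_idx d)"
proof -
  assume p: "\<pi> permutes {0..<4}"
  have inB: "x \<circ> \<sigma> \<in> basis_idx d" if "x \<in> basis_idx d" "\<sigma> permutes {0..<4}" for x \<sigma>
    using that permutes_in_image[OF that(2)] permutes_not_in[OF that(2)]
    by (auto simp: basis_idx_def PiE_def Pi_def extensional_def)
  show ?thesis
  proof (rule bij_betw_byWitness[where f'="\<lambda>x. x \<circ> inv \<pi>"])
    show "\<forall>a\<in>basis_idx d. a \<circ> \<pi> \<circ> inv \<pi> = a"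
      using p by (simp add: o_assoc[symmetric] permutes_inv_o)
    show "\<forall>a\<in>basis_idx d. a \<circ> inv \<pi> \<circ> \<pi> = a"
      using p by (simp add: o_assoc[symmetric] permutes_inv_o)
    show "(\<lambda>x. x \<circ> \<pi>) ` basis_idx d \<subseteq> basis_idx d" using inB p by auto
    show "(\<lambda>x. x \<circ> inv \<pi>) ` basis_idx d \<subseteq> basis_idx d" using inB p permutes_inv by auto
  qed
qed

lemma pt_perm:
  assumes p: "\<pi> permutes {0..<4}" and x: "x \<in> basis_idx d" and y: "y \<in> basis_idx d"
  shows "ptrans S \<rho> (x \<circ> \<pi>) (y \<circ> \<pi>) = ptrans (\<pi> ` S) \<rho> x y"
proof -
  have xp: "x \<circ> \<pi> \<in> basis_idx d" and yp: "y \<circ> \<pi> \<in> basis_idx d"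
    using bij_betwE[OF bijB[OF p]] x y by auto
  have inj: "\<pi> i \<in> \<pi> ` S \<longleftrightarrow> i \<in> S" for i
    using p by (meson inj_image_mem_iff permutes_inj)
  have e1: "(\<lambda>i. if i \<in> S then (y \<circ> \<pi>) i else (x \<circ> \<pi>) i) = (\<lambda>i. if i \<in> \<pi> ` S then y i else x i) \<circ> \<pi>"
    by (auto simp: inj)
  have e2: "(\<lambda>i. if i \<in> S then (x \<circ> \<pi>) i else (y \<circ> \<pi>) i) = (\<lambda>i. if i \<in> \<pi> ` S then x i else y i) \<circ> \<pi>"
    by (auto simp: inj)
  show ?thesis
    unfolding pt[OF xp yp] pt[OF x y] e1 e2 ms_comp[OF p] ..
qed

lemma Q_perm: "\<pi> permutes {0..<4} \<Longrightarrow> Q S v = Q (\<pi> ` S) (\<lambda>x. v (x \<circ> \<pi>))"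
proof -
  assume p: "\<pi> permutes {0..<4}"
  have "Q S v = (\<Sum>x\<in>basis_idx d. \<Sum>y\<in>basis_idx d. cnj (v (x \<circ> \<pi>)) * ptrans S \<rho> (x \<circ> \<pi>) (y \<circ> \<pi>) * v (y \<circ> \<pi>))"
  proof -
    have r: "(\<Sum>x\<in>basis_idx d. f x) = (\<Sum>x\<in>basis_idx d. f (x \<circ> \<pi>))" for f :: "_ \<Rightarrow> complex"
      using sum.reindex_bij_betw[OF bijB[OF p], of f] by simp
    have "Q S v = (\<Sum>x\<in>basis_idx d. \<Sum>y\<in>basis_idx d. cnj (v x) * ptrans S \<rho> x (y \<circ> \<pi>) * v (y \<circ> \<pi>))"
      unfolding Q_def by (rule sum.cong[OF refl], rule r)
    also have "\<dots> = (\<Sum>x\<in>basis_idx d. \<Sum>y\<in>basis_idx d. cnj (v (x \<circ> \<pi>)) * ptrans S \<rho> (x \<circ> \<pi>) (y \<circ> \<pi>) * v (y \<circ> \<pi>))"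
      by (rule r)
    finally show ?thesis .
  qed
  also have "\<dots> = Q (\<pi> ` S) (\<lambda>x. v (x \<circ> \<pi>))"
    unfolding Q_def by (intro sum.cong refl) (simp add: pt_perm[OF p])
  finally show ?thesis .
qed

end


definition key :: "(nat \<Rightarrow> nat) \<Rightarrow> nat \<times> nat multiset" where
  "key x = (x 0, {#x 1, x 2, x 3#})"

definition rep :: "nat \<Rightarrow> nat \<Rightarrow> nat \<Rightarrow> (nat \<Rightarrow> nat)" where
  "rep s t i = (\<lambda>k. if k = 0 then s else if k = 1 then i else if k = 2 then t else if k = 3 then i else undefined)"

lemma rep_in: "s < d \<Longrightarrow> t < d \<Longrightarrow> i < d \<Longrightarrow> rep s t i \<in> basis_idx d"
  by (auto simp: rep_def basis_idx_def PiE_def Pi_def extensional_def)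

lemma inj_rep: "inj_on (rep s t) D"
  by (rule inj_onI) (metis rep_def one_neq_zero)

context symrho
begin

definition Cf :: "nat \<times> nat multiset \<Rightarrow> nat \<times> nat multiset \<Rightarrow> complex" where
  "Cf a b = (if add_mset (fst b) (snd a) = add_mset (fst a) (snd b)
             then complex_of_real (g (add_mset (fst b) (snd a))) else 0)"

lemma pt0: "x \<in> basis_idx d \<Longrightarrow> y \<in> basis_idx d \<Longrightarrow> ptrans {0} \<rho> x y = Cf (key x) (key y)"
  by (simp add: pt ms_explicit Cf_def key_def)

lemma block:
  assumes s: "s < d" and t: "t < d"
  shows "Q {0, 1} (\<lambda>x. if x \<in> rep s t ` {0..<d} then c (x 1) else 0) =
    (\<Sum>j\<in>{0..<d}. \<Sum>i\<in>{0..<d}. cnj (c j) * complex_of_real (g (add_mset i (add_mset j {#s, t#}))) * c i)"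
proof -
  let ?u = "\<lambda>x. if x \<in> rep s t ` {0..<d} then c (x 1) else 0"
  have sub: "rep s t ` {0..<d} \<subseteq> basis_idx d" using rep_in s t by auto
  have red: "(\<Sum>x\<in>basis_idx d. f x) = (\<Sum>i\<in>{0..<d}. f (rep s t i))"
    if "\<And>x. x \<notin> rep s t ` {0..<d} \<Longrightarrow> f x = 0" for f :: "_ \<Rightarrow> complex"
  proof -
    have "(\<Sum>x\<in>basis_idx d. f x) = (\<Sum>x\<in>rep s t ` {0..<d}. f x)"
      by (rule sum.mono_neutral_right[OF finB sub]) (use that in auto)
    also have "\<dots> = (\<Sum>i\<in>{0..<d}. f (rep s t i))"
      by (rule sum.reindex[OF inj_rep, unfolded o_def])
    finally show ?thesis .
  qed
  have u: "?u (rep s t i) = c i" if "i \<in> {0..<d}" for i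
    using that by (auto simp: rep_def)
  have M: "ptrans {0, 1} \<rho> (rep s t j) (rep s t i) = complex_of_real (g (add_mset i (add_mset j {#s, t#})))"
    if "i < d" "j < d" for i j
    unfolding pt[OF rep_in[OF s t that(2)] rep_in[OF s t that(1)]] by (simp add: ms_explicit rep_def add_mset_commute)
  have "Q {0, 1} ?u = (\<Sum>j\<in>{0..<d}. \<Sum>y\<in>basis_idx d. cnj (?u (rep s t j)) * ptrans {0, 1} \<rho> (rep s t j) y * ?u y)"
    unfolding Q_def by (rule red) auto
  also have "\<dots> = (\<Sum>j\<in>{0..<d}. \<Sum>i\<in>{0..<d}. cnj (?u (rep s t j)) * ptrans {0, 1} \<rho> (rep s t j) (rep s t i) * ?u (rep s t i))"
    by (rule sum.cong[OF refl], rule red) auto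
  also have "\<dots> = (\<Sum>j\<in>{0..<d}. \<Sum>i\<in>{0..<d}. cnj (c j) * complex_of_real (g (add_mset i (add_mset j {#s, t#}))) * c i)"
    apply (intro sum.cong refl)
    subgoal for j i using M[of i j] u[of i] u[of j] by simp
    done
  finally show ?thesis .
qed


lemma core:
  assumes H: "\<And>u. Re (Q {0, 1} u) \<ge> 0"
  shows "Re (Q {0} v) \<ge> 0"
proof -
  define D where "D = {0..<d}"
  define K where "K = key ` basis_idx d"
  define V where "V a = (\<Sum>x\<in>{x\<in>basis_idx d. key x = a}. v x)" for a
  define F where "F p = cnj (V (fst p)) * Cf (fst p) (snd p) * V (snd p)" for p
  define R where "R = (\<lambda>(s, t). {#s, t#}) ` (D \<times> D)"
  define h where "h z = ((fst (snd z), add_mset (fst (snd z)) (fst z)), (snd (snd z), add_mset (snd (snd z)) (fst z)))"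
    for z :: "nat multiset \<times> nat \<times> nat"
  define P1 where "P1 = {p \<in> K \<times> K. add_mset (fst (snd p)) (snd (fst p)) = add_mset (fst (fst p)) (snd (snd p))
       \<and> fst (fst p) \<in># snd (fst p)}"
  have finK: "finite K" unfolding K_def using finB by simp
  have finD: "finite D" unfolding D_def by simp
  have finR: "finite R" unfolding R_def using finD by simp
  have Rin: "{#s, t#} \<in> R" if "s < d" "t < d" for s t
    unfolding R_def D_def using that by (intro image_eqI[where x="(s, t)"]) auto
  have Kchar: "j < d \<and> (\<exists>a b c. m = {#a, b, c#} \<and> a < d \<and> b < d \<and> c < d)" if "(j, m) \<in> K" for j m
    using that unfolding K_def key_def basis_idx_def by (force simp: PiE_def Pi_def)
  have Kin: "(j, add_mset j r) \<in> K" if jd0: "j < d" and rR0: "r \<in> R" for j r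
  proof -
    obtain s t where r: "r = {#s, t#}" "s < d" "t < d" using rR0 unfolding R_def D_def by auto
    define x where "x = (\<lambda>k::nat. if k = 0 then j else if k = 1 then s else if k = 2 then t else if k = 3 then j else undefined)"
    have "x \<in> basis_idx d" using jd0 r by (auto simp: x_def basis_idx_def PiE_def Pi_def extensional_def)
    moreover have "key x = (j, add_mset j r)" by (simp add: x_def key_def r add_mset_commute)
    ultimately show ?thesis unfolding K_def by force
  qed
  have bij: "bij_betw h (R \<times> (D \<times> D)) P1"
  proof (rule bij_betw_imageI)
    show "inj_on h (R \<times> (D \<times> D))"
      by (rule inj_onI) (auto simp: h_def)
    show "h ` (R \<times> (D \<times> D)) = P1"
    proof
      show "h ` (R \<times> (D \<times> D)) \<subseteq> P1"
        using Kin by (auto simp: h_def P1_def D_def add_mset_commute)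
    next
      show "P1 \<subseteq> h ` (R \<times> (D \<times> D))"
      proof
        fix p assume p: "p \<in> P1"
        obtain j m i n where pe: "p = ((j, m), (i, n))" by (metis prod.collapse)
        have jm: "(j, m) \<in> K" and inn: "(i, n) \<in> K" and eq: "add_mset i m = add_mset j n" and jin: "j \<in># m"
          using p unfolding P1_def pe by auto
        obtain a b c where m: "m = {#a, b, c#}" "a < d" "b < d" "c < d" and jd: "j < d" using Kchar[OF jm] by auto
        have id: "i < d" using Kchar[OF inn] by auto
        define r where "r = m - {#j#}"
        have mr: "m = add_mset j r" unfolding r_def using jin by simp
        have rR: "r \<in> R"
        proof -
          have "j = a \<or> j = b \<or> j = c" using jin m by auto
          then show ?thesis
            unfolding r_def m(1) using m Rin by (auto simp: add_mset_commute)
        qed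
        have nr: "n = add_mset i r" using eq unfolding mr by (simp add: add_mset_commute)
        show "p \<in> h ` (R \<times> (D \<times> D))"
          using rR jd id unfolding pe mr nr D_def h_def by (intro image_eqI[where x="(r, (j, i))"]) auto
      qed
    qed
  qed
  have "Q {0} v = (\<Sum>x\<in>basis_idx d. \<Sum>y\<in>basis_idx d. cnj (v x) * Cf (key x) (key y) * v y)"
    unfolding Q_def by (intro sum.cong refl) (simp add: pt0)
  also have "\<dots> = (\<Sum>a\<in>K. \<Sum>b\<in>K. cnj (V a) * Cf a b * V b)"
    unfolding K_def V_def by (rule agg[OF finB])
  also have "\<dots> = (\<Sum>p\<in>K \<times> K. F p)"
    unfolding F_def by (simp add: sum.cartesian_product split_beta)
  also have "\<dots> = (\<Sum>p\<in>K \<times> K - P1. F p) + (\<Sum>p\<in>P1. F p)"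
    by (rule sum.subset_diff) (use finK in \<open>auto simp: P1_def\<close>)
  finally have Qe: "Q {0} v = (\<Sum>p\<in>K \<times> K - P1. F p) + (\<Sum>p\<in>P1. F p)" .
  have part1: "Re (\<Sum>p\<in>K \<times> K - P1. F p) \<ge> 0"
    unfolding Re_sum
  proof (rule sum_nonneg)
    fix p assume p: "p \<in> K \<times> K - P1"
    obtain j m i n where pe: "p = ((j, m), (i, n))" by (metis prod.collapse)
    show "Re (F p) \<ge> 0"
    proof (cases "add_mset i m = add_mset j n")
      case False
      then show ?thesis by (simp add: F_def Cf_def pe)
    next
      case True
      then have "j \<notin># m" using p by (auto simp: P1_def pe)
      moreover have "j \<in># add_mset i m" using True by simp
      ultimately have "j = i" by auto
      with True have "m = n" by simp
      then show ?thesis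
        using \<open>j = i\<close> g0[of "add_mset i n"] by (simp add: F_def Cf_def pe nonneg_aux)
    qed
  qed
  have "(\<Sum>p\<in>P1. F p) = (\<Sum>z\<in>R \<times> (D \<times> D). F (h z))"
    using sum.reindex_bij_betw[OF bij, of F] by simp
  also have "\<dots> = (\<Sum>r\<in>R. \<Sum>p\<in>D \<times> D. F (h (r, p)))"
    by (simp add: sum.cartesian_product)
  finally have P1e: "(\<Sum>p\<in>P1. F p) = (\<Sum>r\<in>R. \<Sum>p\<in>D \<times> D. F (h (r, p)))" .
  have part2: "Re (\<Sum>p\<in>D \<times> D. F (h (r, p))) \<ge> 0" if r: "r \<in> R" for r
  proof -
    obtain s t where rst: "r = {#s, t#}" "s < d" "t < d" using r unfolding R_def D_def by auto
    define c where "c i = V (i, add_mset i r)" for i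
    have "(\<Sum>p\<in>D \<times> D. F (h (r, p))) = (\<Sum>j\<in>D. \<Sum>i\<in>D. F (h (r, (j, i))))"
      by (simp add: sum.cartesian_product)
    also have "\<dots> = (\<Sum>j\<in>{0..<d}. \<Sum>i\<in>{0..<d}. cnj (c j) * complex_of_real (g (add_mset i (add_mset j {#s, t#}))) * c i)"
      unfolding D_def by (intro sum.cong refl) (simp add: F_def h_def Cf_def c_def rst add_mset_commute)
    also have "\<dots> = Q {0, 1} (\<lambda>x. if x \<in> rep s t ` {0..<d} then c (x 1) else 0)"
      by (rule block[OF rst(2,3), symmetric])
    finally show ?thesis using H by simp
  qed
  show ?thesis
    unfolding Qe P1e using part1 part2 by (simp add: Re_sum sum_nonneg)
qed


definition P where "P S \<longleftrightarrow> (\<forall>v. Re (Q S v) \<ge> 0)"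

lemma P_compl: "S \<subseteq> {0..<4} \<Longrightarrow> P ({0..<4} - S) \<Longrightarrow> P S"
  unfolding P_def using Q_compl by metis

lemma P_perm: "\<pi> permutes {0..<4} \<Longrightarrow> P (\<pi> ` S) \<Longrightarrow> P S"
  unfolding P_def using Q_perm by metis

lemma allS:
  assumes h: "psd d (ptrans {0, 1} \<rho>)"
  shows "\<forall>S. S \<subseteq> {0..<4} \<and> S \<noteq> {} \<and> S \<noteq> {0..<4} \<longrightarrow> psd d (ptrans S \<rho>)"
proof -
  have p01: "P {0, 1}" using psdD[OF h] by (simp add: P_def)
  have p0: "P {0}" using core p01 by (simp add: P_def)
  have tp: "transpose a b permutes {0..<4}" if "a < 4" "b < 4" for a b :: nat
    using that by (intro permutes_swap_id) auto
  have ps: "P {a}" if "a < 4" for a :: nat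
    by (rule P_perm[OF tp[OF _ that, of 0]]) (use p0 in auto)
  have p02: "P {0, 2}"
    by (rule P_perm[OF tp[of 1 2]]) (use p01 in \<open>auto simp: insert_commute\<close>)
  have p03: "P {0, 3}"
    by (rule P_perm[OF tp[of 1 3]]) (use p01 in \<open>auto simp: insert_commute\<close>)
  have cmp: "P S" if "S \<subseteq> {0..<4}" "P ({0..<4} - S)" for S using P_compl that by blast
  have all: "P S" if S: "S \<subseteq> {0..<4}" "S \<noteq> {}" "S \<noteq> {0..<4}" for S
  proof -
    have S4: "x = 0 \<or> x = 1 \<or> x = 2 \<or> x = 3" if "x \<in> S" for x
      using S(1) that by auto
    have Se: "S = (if 0 \<in> S then {0} else {}) \<union> (if 1 \<in> S then {1} else {}) \<union>
                 (if 2 \<in> S then {2} else {}) \<union> (if 3 \<in> S then {3} else {})"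
      using S4 by (auto split: if_splits)
    have c2: "P T" if "T \<subseteq> {0..<4}" "{0..<4} - T = U" "P U" for T U
      using cmp that by blast
    have e4: "{0..<4::nat} = {0,1,2,3}" by auto
    have e13: "{0..<4::nat} - {1,3} = {0,2}" "{0..<4::nat} - {1,2} = {0,3}" "{0..<4::nat} - {2,3} = {0,1}"
      "{0..<4::nat} - {1,2,3} = {0}" "{0..<4::nat} - {0,2,3} = {1}" "{0..<4::nat} - {0,1,3} = {2}" "{0..<4::nat} - {0,1,2} = {3}"
      by auto
    have l: "P {0}" "P {1}" "P {2}" "P {3}" "P {0,1}" "P {0,2}" "P {0,3}"
      "P {1,2}" "P {1,3}" "P {2,3}" "P {1,2,3}" "P {0,2,3}" "P {0,1,3}" "P {0,1,2}"
      using ps[of 0] ps[of 1] ps[of 2] ps[of 3] p01 p02 p03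
         c2[OF _ e13(1)] c2[OF _ e13(2)] c2[OF _ e13(3)] c2[OF _ e13(4)] c2[OF _ e13(5)] c2[OF _ e13(6)] c2[OF _ e13(7)]
      by simp_all
    have ne: "0 \<in> S \<or> 1 \<in> S \<or> 2 \<in> S \<or> 3 \<in> S" using S(2) S4 by blast
    have nf: "0 \<notin> S \<or> 1 \<notin> S \<or> 2 \<notin> S \<or> 3 \<notin> S"
    proof (rule ccontr)
      assume "\<not> ?thesis"
      then have "S = {0..<4}" using S(1) unfolding e4 by auto
      with S(3) show False by simp
    qed
    have Sx: "S = set (filter (\<lambda>x. x \<in> S) [0,1,2,3])" using S4 by auto
    show ?thesis using ne nf l
      by (subst Sx, cases "0 \<in> S"; cases "1 \<in> S"; cases "2 \<in> S"; cases "3 \<in> S") simp_all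
  qed
  show ?thesis
  proof (intro allI impI)
    fix S :: "nat set"
    assume "S \<subseteq> {0..<4} \<and> S \<noteq> {} \<and> S \<noteq> {0..<4}"
    then have "P S" using all by blast
    then show "psd d (ptrans S \<rho>)" unfolding P_def by (intro psdI) blast
  qed
qed

end

theorem lemma4:
  fixes d :: nat and \<rho> :: "(nat \<Rightarrow> nat) \<Rightarrow> (nat \<Rightarrow> nat) \<Rightarrow> complex"
  assumes "d \<ge> 2"
    and "diag_sym_state d \<rho>"
    and "psd d (ptrans {0, 1} \<rho>)"
  shows "\<forall>S. S \<subseteq> {0..<4} \<and> S \<noteq> {} \<and> S \<noteq> {0..<4} \<longrightarrow> psd d (ptrans S \<rho>)"
proof -
  obtain g where g: "\<forall>M. g M \<ge> 0" and r: "\<forall>x\<in>basis_idx d. \<forall>y\<in>basis_idx d.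
     \<rho> x y = (if ms x = ms y then complex_of_real (g (ms x)) else 0)"
    using rho_form[OF assms(2)] by blast
  interpret symrho d g \<rho>
    by unfold_locales (use g r in auto)
  show ?thesis using allS[OF assms(3)] .
qed

end
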